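(* Let $A$ be a deterministic KAT automaton over $(\Sigma,T_0)$ and $\mathfrak{t}:T_0\to\mathsf{BA}(T_1)$. Then $L(\mathsf{compose}_{\mathfrak{t}}(A))=\mathrm{apply}_{\mathfrak{t}}(L(A))$.
   Context: Atoms $\mathsf{At}_T=2^T$; $\mathsf{BA}(T)$ Boolean expressions over $T$; $\alpha\le b$ means $b$ holds under the assignment making exactly the tests in $\alpha$ true. Guarded strings: words in $\mathsf{At}_T(\Sigma\mathsf{At}_T)^*$. Deterministic KAT automaton over $(\Sigma,T)$: $A=(Q,\delta,\iota)$, $Q$ finite, $\delta:Q\times\mathsf{At}_T\to\{\mathsf{accept},\mathsf{reject}\}+\Sigma\times Q$, $\iota:\mathsf{At}_T\to\{\mathsf{accept},\mathsf{reject}\}+\Sigma\times Q$. $L_A(\gamma)$ is the smallest set with $\gamma(\alpha)=\mathsf{accept}\Rightarrow\alpha\in L_A(\gamma)$ and $\gamma(\alpha)=(p,q)$, $w\in L_A(\delta(q,-))\Rightarrow\alpha pw\in L_A(\gamma)$; $L(A)=L_A(\iota)$. $\mathsf{compose}_{\mathfrak{t}}(A)$ for $A=(Q,\delta,\iota)$ over $(\Sigma,T_0)$: for $\beta\in\mathsf{At}_{T_1}$ let $\mathfrak{t}^{-1}(\beta)\in\mathsf{At}_{T_0}$ be the atom with $t\in\mathfrak{t}^{-1}(\beta)$ iff $\beta\le\mathfrak{t}(t)$; then $\mathsf{compose}_{\mathfrak{t}}(A)=(Q,\delta',\iota')$ over $(\Sigma,T_1)$ with $\delta'(q,\beta)=\delta(q,\mathfrak{t}^{-1}(\beta))$,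 $\iota'(\beta)=\iota(\mathfrak{t}^{-1}(\beta))$. $\beta\in\mathsf{At}_{T_1}$ is $\mathfrak{t}$-consistent with $\alpha\in\mathsf{At}_{T_0}$ if for all $t\in T_0$, $\alpha\le t$ iff $\beta\le\mathfrak{t}(t)$. For a guarded language $L$ over $(\Sigma,T_0)$, $\mathrm{apply}_{\mathfrak{t}}(L)$ is the set of guarded strings $\beta_0p_0\beta_1\cdots p_{n-1}\beta_n$ over $(\Sigma,T_1)$ such that some $\alpha_0p_0\alpha_1\cdots p_{n-1}\alpha_n\in L$ has each $\beta_i$ $\mathfrak{t}$-consistent with $\alpha_i$. *)

theory Defs
  imports Main
begin

datatype 't bexp = BTrue | BFalse | BTest 't | BNot "'t bexp"
  | BAnd "'t bexp" "'t bexp" | BOr "'t bexp" "'t bexp"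

fun bvars :: "'t bexp \<Rightarrow> 't set" where
  "bvars BTrue = {}" | "bvars BFalse = {}" | "bvars (BTest t) = {t}"
| "bvars (BNot b) = bvars b" | "bvars (BAnd b c) = bvars b \<union> bvars c"
| "bvars (BOr b c) = bvars b \<union> bvars c"

definition BA :: "'t set \<Rightarrow> 't bexp set" where
  "BA T = {b. bvars b \<subseteq> T}"

(* atoms At_T = 2^T, represented as the set of tests that are true *)
definition atoms :: "'t set \<Rightarrow> 't set set" where
  "atoms T = Pow T"

fun sat :: "'t set \<Rightarrow> 't bexp \<Rightarrow> bool" where
  "sat \<alpha> BTrue = True" | "sat \<alpha> BFalse = False" | "sat \<alpha> (BTest t) = (t \<in> \<alpha>)"
| "sat \<alpha> (BNot b) = (\<not> sat \<alpha> b)" | "sat \<alpha> (BAnd b c) = (sat \<alpha> b \<and> sat \<alpha> c)"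
| "sat \<alpha> (BOr b c) = (sat \<alpha> b \<or> sat \<alpha> c)"

(* guarded string alpha_0 p_0 alpha_1 ... p_{n-1} alpha_n  as (alpha_0, [(p_0,alpha_1),...]) *)
type_synonym ('s, 't) gstring = "'t set \<times> ('s \<times> 't set) list"

definition guarded :: "'t set \<Rightarrow> ('s, 't) gstring \<Rightarrow> bool" where
  "guarded T w \<longleftrightarrow> fst w \<in> atoms T \<and> (\<forall>(p, \<alpha>) \<in> set (snd w). \<alpha> \<in> atoms T)"

datatype ('s, 'q) res = Accept | Reject | Step 's 'q

record ('q, 's, 't) kat_aut =
  states :: "'q set"
  trans :: "'q \<Rightarrow> 't set \<Rightarrow> ('s, 'q) res"
  init :: "'t set \<Rightarrow> ('s, 'q) res"

definition res_ok :: "'q set \<Rightarrow> ('s, 'q) res \<Rightarrow> bool" where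
  "res_ok Q r \<longleftrightarrow> (\<forall>p q. r = Step p q \<longrightarrow> q \<in> Q)"

definition det_kat_aut :: "'s set \<Rightarrow> 't set \<Rightarrow> ('q, 's, 't) kat_aut \<Rightarrow> bool" where
  "det_kat_aut \<Sigma> T A \<longleftrightarrow> finite (states A) \<and>
     (\<forall>\<alpha> \<in> atoms T. res_ok (states A) (init A \<alpha>) \<and>
         (\<forall>p q. init A \<alpha> = Step p q \<longrightarrow> p \<in> \<Sigma>)) \<and>
     (\<forall>q \<in> states A. \<forall>\<alpha> \<in> atoms T. res_ok (states A) (trans A q \<alpha>) \<and>
         (\<forall>p q'. trans A q \<alpha> = Step p q' \<longrightarrow> p \<in> \<Sigma>))"

inductive LA :: "'t set \<Rightarrow> ('q, 's, 't) kat_aut \<Rightarrow> ('t set \<Rightarrow> ('s, 'q) res)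
                      \<Rightarrow> ('s, 't) gstring \<Rightarrow> bool"
  for T A where
  acc: "\<alpha> \<in> atoms T \<Longrightarrow> \<gamma> \<alpha> = Accept \<Longrightarrow> LA T A \<gamma> (\<alpha>, [])"
| step: "\<alpha> \<in> atoms T \<Longrightarrow> \<gamma> \<alpha> = Step p q \<Longrightarrow> LA T A (trans A q) (\<beta>, w)
         \<Longrightarrow> LA T A \<gamma> (\<alpha>, (p, \<beta>) # w)"

definition lang :: "'t set \<Rightarrow> ('q, 's, 't) kat_aut \<Rightarrow> ('s, 't) gstring set" where
  "lang T A = Collect (LA T A (init A))"

definition tinv :: "'t0 set \<Rightarrow> ('t0 \<Rightarrow> 't1 bexp) \<Rightarrow> 't1 set \<Rightarrow> 't0 set" where
  "tinv T0 tt \<beta> = {t \<in> T0. sat \<beta> (tt t)}"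

definition compose :: "'t0 set \<Rightarrow> ('t0 \<Rightarrow> 't1 bexp) \<Rightarrow> ('q, 's, 't0) kat_aut
                        \<Rightarrow> ('q, 's, 't1) kat_aut" where
  "compose T0 tt A = \<lparr> states = states A,
       trans = (\<lambda>q \<beta>. trans A q (tinv T0 tt \<beta>)),
       init = (\<lambda>\<beta>. init A (tinv T0 tt \<beta>)) \<rparr>"

definition consistent :: "'t0 set \<Rightarrow> ('t0 \<Rightarrow> 't1 bexp) \<Rightarrow> 't1 set \<Rightarrow> 't0 set \<Rightarrow> bool" where
  "consistent T0 tt \<beta> \<alpha> \<longleftrightarrow> (\<forall>t \<in> T0. t \<in> \<alpha> \<longleftrightarrow> sat \<beta> (tt t))"

definition apply_t :: "'t0 set \<Rightarrow> 't1 set \<Rightarrow> ('t0 \<Rightarrow> 't1 bexp) \<Rightarrow> ('s, 't0) gstring set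
                       \<Rightarrow> ('s, 't1) gstring set" where
  "apply_t T0 T1 tt L = {(\<beta>0, ws). guarded T1 (\<beta>0, ws) \<and>
     (\<exists>\<alpha>0 vs. (\<alpha>0, vs) \<in> L \<and> length vs = length ws \<and>
        map fst vs = map fst ws \<and> consistent T0 tt \<beta>0 \<alpha>0 \<and>
        (\<forall>i < length ws. consistent T0 tt (snd (ws ! i)) (snd (vs ! i))))}"

end

theory Submission
  imports Defs
begin

definition mw :: "'t0 set \<Rightarrow> ('t0 \<Rightarrow> 't1 bexp) \<Rightarrow> ('s, 't1) gstring \<Rightarrow> ('s, 't0) gstring" where
  "mw T0 tt w = (tinv T0 tt (fst w), map (\<lambda>(p, \<beta>). (p, tinv T0 tt \<beta>)) (snd w))"

lemma tinv_atoms: "tinv T0 tt \<beta> \<in> atoms T0"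
  by (auto simp: tinv_def atoms_def)

lemma dir1:
  assumes "LA T1 (compose T0 tt A) g w" "g = (\<lambda>\<beta>. \<gamma> (tinv T0 tt \<beta>))"
  shows "LA T0 A \<gamma> (mw T0 tt w) \<and> guarded T1 w"
  using assms
proof (induction arbitrary: \<gamma> rule: LA.induct)
  case (acc \<alpha> \<gamma>')
  then show ?case by (auto simp: mw_def guarded_def tinv_atoms intro!: LA.acc)
next
  case (step \<alpha> \<gamma>' p q \<beta> w)
  have "LA T0 A (trans A q) (mw T0 tt (\<beta>, w)) \<and> guarded T1 (\<beta>, w)"
    using step.IH[of "trans A q"] by (simp add: compose_def)
  then show ?case using step.hyps step.prems
    by (auto simp: mw_def guarded_def tinv_atoms intro!: LA.step)
qed

lemma dir2:
  "\<forall>\<beta> \<gamma>. LA T0 A \<gamma> (mw T0 tt (\<beta>, ws)) \<longrightarrow> guarded T1 (\<beta>, ws) \<longrightarrow>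
     LA T1 (compose T0 tt A) (\<lambda>\<beta>. \<gamma> (tinv T0 tt \<beta>)) (\<beta>, ws)"
proof (induction ws)
  case Nil
  show ?case
    by (auto simp: mw_def guarded_def elim!: LA.cases intro!: LA.acc)
next
  case (Cons a ws)
  obtain p \<beta>' where a: "a = (p, \<beta>')" by (cases a)
  show ?case
  proof (intro allI impI)
    fix \<beta> \<gamma>
    assume L: "LA T0 A \<gamma> (mw T0 tt (\<beta>, a # ws))" and g: "guarded T1 (\<beta>, a # ws)"
    from L obtain q where q: "\<gamma> (tinv T0 tt \<beta>) = Step p q"
      and L2: "LA T0 A (trans A q) (mw T0 tt (\<beta>', ws))"
      by (cases rule: LA.cases) (auto simp: mw_def a)
    have "LA T1 (compose T0 tt A) (\<lambda>\<beta>. trans A q (tinv T0 tt \<beta>)) (\<beta>', ws)"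
      using Cons.IH L2 g by (auto simp: guarded_def a)
    hence "LA T1 (compose T0 tt A) (trans (compose T0 tt A) q) (\<beta>', ws)"
      by (simp add: compose_def)
    then show "LA T1 (compose T0 tt A) (\<lambda>\<beta>. \<gamma> (tinv T0 tt \<beta>)) (\<beta>, a # ws)"
      using g q by (auto simp: a guarded_def intro!: LA.step)
  qed
qed

lemma LA_sub:
  assumes "LA T A g v" shows "fst v \<subseteq> T \<and> (\<forall>x \<in> set (snd v). snd x \<subseteq> T)"
  using assms by (induction rule: LA.induct) (auto simp: atoms_def)

lemma cons_eq: "consistent T0 tt \<beta> \<alpha> \<Longrightarrow> \<alpha> \<subseteq> T0 \<Longrightarrow> \<alpha> = tinv T0 tt \<beta>"
  by (auto simp: consistent_def tinv_def)

lemma cons_tinv: "consistent T0 tt \<beta> (tinv T0 tt \<beta>)"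
  by (auto simp: consistent_def tinv_def)

theorem proposition6p6:
  fixes \<Sigma> :: "'s set" and T0 :: "'t0 set" and T1 :: "'t1 set"
    and A :: "('q, 's, 't0) kat_aut" and tt :: "'t0 \<Rightarrow> 't1 bexp"
  assumes "finite T0" and "finite T1"
    and "det_kat_aut \<Sigma> T0 A"
    and "\<forall>t \<in> T0. tt t \<in> BA T1"
  shows "lang T1 (compose T0 tt A) = apply_t T0 T1 tt (lang T0 A)"
proof (intro set_eqI iffI)
  fix w :: "('s, 't1) gstring"
  obtain \<beta>0 ws where w: "w = (\<beta>0, ws)" by (cases w)
  {
    assume "w \<in> lang T1 (compose T0 tt A)"
    hence "LA T1 (compose T0 tt A) (\<lambda>\<beta>. init A (tinv T0 tt \<beta>)) w"
      by (simp add: lang_def compose_def)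
    from dir1[OF this refl] have L: "LA T0 A (init A) (mw T0 tt w)" and g: "guarded T1 w" by auto
    show "w \<in> apply_t T0 T1 tt (lang T0 A)"
      unfolding apply_t_def w
      using L g
      by (auto simp: w lang_def mw_def cons_tinv intro!: exI[of _ "tinv T0 tt \<beta>0"]
             exI[of _ "map (\<lambda>(p, \<beta>). (p, tinv T0 tt \<beta>)) ws"] split: prod.splits)
  next
    assume "w \<in> apply_t T0 T1 tt (lang T0 A)"
    then obtain \<alpha>0 vs where g: "guarded T1 w" and L: "LA T0 A (init A) (\<alpha>0, vs)"
      and len: "length vs = length ws" and f: "map fst vs = map fst ws"
      and c0: "consistent T0 tt \<beta>0 \<alpha>0"
      and ci: "\<forall>i < length ws. consistent T0 tt (snd (ws ! i)) (snd (vs ! i))"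
      by (auto simp: apply_t_def lang_def w)
    from LA_sub[OF L] have s0: "\<alpha>0 \<subseteq> T0" and si: "\<forall>x \<in> set vs. snd x \<subseteq> T0" by auto
    have a0: "\<alpha>0 = tinv T0 tt \<beta>0" using cons_eq[OF c0 s0] .
    have "vs = map (\<lambda>(p, \<beta>). (p, tinv T0 tt \<beta>)) ws"
    proof (rule nth_equalityI)
      show "length vs = length (map (\<lambda>(p, \<beta>). (p, tinv T0 tt \<beta>)) ws)" using len by simp
      fix i assume i: "i < length vs"
      have e1: "fst (vs ! i) = fst (ws ! i)" using f i len
        by (metis nth_map)
      have e2: "snd (vs ! i) = tinv T0 tt (snd (ws ! i))"
        using cons_eq[OF ci[rule_format] si[rule_format]] i len by auto
      show "vs ! i = map (\<lambda>(p, \<beta>). (p, tinv T0 tt \<beta>)) ws ! i"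
        using e1 e2 i len by (cases "vs ! i"; cases "ws ! i") auto
    qed
    hence "LA T0 A (init A) (mw T0 tt w)" using L a0 by (simp add: mw_def w)
    hence "LA T1 (compose T0 tt A) (\<lambda>\<beta>. init A (tinv T0 tt \<beta>)) w"
      using dir2 g w by blast
    thus "w \<in> lang T1 (compose T0 tt A)" by (simp add: lang_def compose_def)
  }
qed

end
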